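(* Let $(M,d)$ be a compact metric space, $\mu$ a probability measure on $M$, $k:M\times M\to[0,1]$ measurable, $M^s\subseteq M$ measurable, and $\rho>0$. For a bounded measurable $f:M\setminus M^s\to\mathbb{R}$ define $A_\mu f:M\setminus M^s\to\mathbb{R}$ by $$(A_\mu f)(x)=\frac{\int_{M\setminus M^s}k(x,y)f(y)\,d\mu(y)}{\rho+\int_M k(x,y)\,d\mu(y)}.$$ Then $\|A_\mu f\|_\infty\le\frac{1}{1+\rho}\|f\|_\infty$, where $\|g\|_\infty=\sup_{x\in M\setminus M^s}|g(x)|$. *)

theory Defs
  imports "HOL-Probability.Probability"
begin

text \<open>Sup norm of g over a set S. The 0 is inserted so that the empty
  domain gets norm 0; for nonempty S this equals the supremum of the
  (nonnegative) values |g x|.\<close>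
definition sup_norm_on :: "'a set \<Rightarrow> ('a \<Rightarrow> real) \<Rightarrow> real" where
  "sup_norm_on S g = Sup (insert 0 ((\<lambda>x. \<bar>g x\<bar>) ` S))"

definition A_op :: "'a measure \<Rightarrow> ('a \<times> 'a \<Rightarrow> real) \<Rightarrow> 'a set \<Rightarrow> real
    \<Rightarrow> ('a \<Rightarrow> real) \<Rightarrow> 'a \<Rightarrow> real" where
  "A_op \<mu> k Ms \<rho> f x =
     (LINT y:(space \<mu> - Ms)|\<mu>. k (x, y) * f y) / (\<rho> + (LINT y|\<mu>. k (x, y)))"

end

theory Submission
  imports Defs
begin

theorem lemma2:
  fixes M :: "'a::metric_space set" and \<mu> :: "'a measure"
    and k :: "'a \<times> 'a \<Rightarrow> real" and Ms :: "'a set" and \<rho> :: real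
    and f :: "'a \<Rightarrow> real"
  assumes "compact M"
    and "prob_space \<mu>"
    and "space \<mu> = M"
    and "sets \<mu> = sets (restrict_space borel M)"
    and "k \<in> borel_measurable (\<mu> \<Otimes>\<^sub>M \<mu>)"
    and "\<And>x y. x \<in> M \<Longrightarrow> y \<in> M \<Longrightarrow> 0 \<le> k (x, y) \<and> k (x, y) \<le> 1"
    and "Ms \<in> sets \<mu>"
    and "\<rho> > 0"
    and "f \<in> borel_measurable (restrict_space \<mu> (M - Ms))"
    and "bounded (f ` (M - Ms))"
  shows "sup_norm_on (M - Ms) (A_op \<mu> k Ms \<rho> f) \<le> 1 / (1 + \<rho>) * sup_norm_on (M - Ms) f"
proof -
  interpret P: prob_space \<mu> by fact
  define F where "F = sup_norm_on (M - Ms) f"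
  have bdd: "bdd_above (insert 0 ((\<lambda>x. \<bar>f x\<bar>) ` (M - Ms)))"
  proof -
    obtain B where "\<forall>y\<in>f ` (M - Ms). norm y \<le> B" using assms(10) bounded_iff by blast
    then show ?thesis unfolding bdd_above_def by (auto intro!: exI[of _ "max 0 B"] simp: le_max_iff_disj)
  qed
  have F0: "0 \<le> F" unfolding F_def sup_norm_on_def by (rule cSup_upper[OF _ bdd]) auto
  have Ff: "\<bar>f y\<bar> \<le> F" if "y \<in> M - Ms" for y
    unfolding F_def sup_norm_on_def by (rule cSup_upper[OF _ bdd]) (use that in auto)
  have pt: "\<bar>A_op \<mu> k Ms \<rho> f x\<bar> \<le> F / (1 + \<rho>)" if x: "x \<in> M - Ms" for x
  proof -
    have meas: "(\<lambda>y. k (x, y)) \<in> borel_measurable \<mu>"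
      by (rule measurable_Pair2[OF assms(5)]) (use x assms(3) in auto)
    have int: "integrable \<mu> (\<lambda>y. k (x, y))"
      by (rule P.integrable_const_bound[where B=1]) (use meas assms(6) assms(3) x in auto)
    define K where "K = (LINT y|\<mu>. k (x, y))"
    have K0: "0 \<le> K" unfolding K_def
      by (intro integral_nonneg_AE AE_I2) (use assms(6) assms(3) x in auto)
    have K1: "K \<le> 1"
    proof -
      have "K \<le> (LINT y|\<mu>. 1)" unfolding K_def
        by (rule integral_mono[OF int]) (use assms(6) assms(3) x in auto)
      then show ?thesis by (simp add: P.prob_space)
    qed
    define I where "I = (LINT y:(space \<mu> - Ms)|\<mu>. k (x, y) * f y)"
    have "\<bar>I\<bar> \<le> (LINT y|\<mu>. \<bar>indicator (space \<mu> - Ms) y *\<^sub>R (k (x, y) * f y)\<bar>)"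
      unfolding I_def set_lebesgue_integral_def by (rule integral_abs_bound)
    also have "\<dots> \<le> (LINT y|\<mu>. k (x, y) * F)"
    proof (rule integral_mono')
      show "integrable \<mu> (\<lambda>y. k (x, y) * F)" using int by simp
      fix y assume y: "y \<in> space \<mu>"
      have k: "0 \<le> k (x, y)" "k (x, y) \<le> 1" using assms(6) assms(3) x y by auto
      show "0 \<le> k (x, y) * F" using k F0 by simp
      show "\<bar>indicator (space \<mu> - Ms) y *\<^sub>R (k (x, y) * f y)\<bar> \<le> k (x, y) * F"
      proof (cases "y \<in> Ms")
        case True then show ?thesis using k F0 by simp
      next
        case False
        then have "\<bar>f y\<bar> \<le> F" using Ff y assms(3) by auto
        then show ?thesis using False y k by (simp add: abs_mult mult_left_mono)
      qed
    qed
    also have "\<dots> = K * F" unfolding K_def by simp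
    finally have IK: "\<bar>I\<bar> \<le> K * F" .
    have "\<bar>A_op \<mu> k Ms \<rho> f x\<bar> = \<bar>I\<bar> / (\<rho> + K)"
      unfolding A_op_def I_def K_def using K0 assms(8) K_def by simp
    also have "\<dots> \<le> K * F / (\<rho> + K)"
      using IK K0 assms(8) by (simp add: divide_right_mono)
    also have "\<dots> \<le> F / (1 + \<rho>)"
    proof -
      have "K * F * (1 + \<rho>) \<le> F * (\<rho> + K)"
      proof -
        have "K * F * (1 + \<rho>) = F * K + F * (K * \<rho>)" by (simp add: algebra_simps)
        also have "\<dots> \<le> F * K + F * \<rho>" using K1 F0 assms(8)
          by (intro add_left_mono mult_left_mono) (auto simp: mult_le_cancel_right1)
        finally show ?thesis by (simp add: algebra_simps)
      qed
      then show ?thesis using K0 assms(8) by (simp add: field_simps)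
    qed
    finally show ?thesis .
  qed
  show ?thesis
    unfolding sup_norm_on_def[of _ "A_op \<mu> k Ms \<rho> f"] F_def[symmetric]
    by (rule cSup_least) (use pt F0 assms(8) in auto)
qed

end
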